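(* For every natural number $n>1$, the following sentences are provable in the theory ${\sf TQ}$: $\forall u\exists y\,[\Re_n(y\cdot u)]$; $\forall x,u\exists y\,[x<y\wedge\Re_n(y\cdot u)]$; $\forall z,u\exists y\,[y<z\wedge\Re_n(y\cdot u)]$; $\forall x,z,u\exists y\,[x<z\rightarrow (x<y\wedge y<z\wedge\Re_n(y\cdot u))]$.
   Context: Language $\{<,\times,\square^{-1},\mathbf{1}\}$; $y^n$ abbreviates $y\cdots y$ ($n$ times); for $n\geqslant 1$, $\Re_n(y)$ abbreviates the formula $\exists x\,(y=x^n)$. ${\sf TQ}$ is the theory axiomatized by: ($\texttt{O}_1$) $\forall x,y(x<y\rightarrow\neg(y<x))$; ($\texttt{O}_2$) $\forall x,y,z(x<y\wedge y<z\rightarrow x<z)$; ($\texttt{O}_3$) $\forall x,y(x<y\vee x=y\vee y<x)$; ($\texttt{M}_1$) $\forall x,y,z(x\cdot(y\cdot z)=(x\cdot y)\cdot z)$; ($\texttt{M}_2$) $\forall x(x\cdot\mathbf{1}=x)$; ($\texttt{M}_3$) $\forall x(x\cdot x^{-1}=\mathbf{1})$; ($\texttt{M}_4$) $\forall x,y(x\cdot y=y\cdot x)$; ($\texttt{M}_5$) $\forall x,y,z(x<y\rightarrow x\cdot z<y\cdot z)$; ($\texttt{M}_6$) $\exists y(y\neq\mathbf{1})$; ($\texttt{M}_{10}$) for each $n\geqslant1$: $\forall x,z\exists y(x<z\rightarrow x<y^n\wedge y^n<z)$; ($\texttt{M}_{11}$) for each $n\geqslant 1$, each $q\geqslant1$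 and all natural numbers $m_0,\dots,m_{q-1}>1$: $\forall x_0,\dots,x_{q-1}\exists y\forall z\bigwedge_{j<q,\ m_j\nmid n}(y^n\cdot x_j\neq z^{m_j})$, the conjunction ranging over those $j<q$ for which $m_j$ does not divide $n$. *)

theory Defs
  imports Main
begin

text \<open>A structure for the language {<, *, inverse, 1} is given by four
  parameters on a carrier type 'a.  Provability in TQ is rendered
  semantically (Goedel completeness): truth in every model of TQ.\<close>

fun npow :: "('a \<Rightarrow> 'a \<Rightarrow> 'a) \<Rightarrow> 'a \<Rightarrow> 'a \<Rightarrow> nat \<Rightarrow> 'a" where
  "npow mult one y 0 = one"
| "npow mult one y (Suc 0) = y"
| "npow mult one y (Suc (Suc k)) = mult y (npow mult one y (Suc k))"

definition Re :: "('a \<Rightarrow> 'a \<Rightarrow> 'a) \<Rightarrow> 'a \<Rightarrow> nat \<Rightarrow> 'a \<Rightarrow> bool" where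
  "Re mult one n y \<longleftrightarrow> (\<exists>x. y = npow mult one x n)"

definition TQ :: "('a \<Rightarrow> 'a \<Rightarrow> bool) \<Rightarrow> ('a \<Rightarrow> 'a \<Rightarrow> 'a) \<Rightarrow> ('a \<Rightarrow> 'a) \<Rightarrow> 'a \<Rightarrow> bool" where
  "TQ lt mult iv one \<longleftrightarrow>
     (\<forall>x y. lt x y \<longrightarrow> \<not> lt y x) \<and>
     (\<forall>x y z. lt x y \<and> lt y z \<longrightarrow> lt x z) \<and>
     (\<forall>x y. lt x y \<or> x = y \<or> lt y x) \<and>
     (\<forall>x y z. mult x (mult y z) = mult (mult x y) z) \<and>
     (\<forall>x. mult x one = x) \<and>
     (\<forall>x. mult x (iv x) = one) \<and>
     (\<forall>x y. mult x y = mult y x) \<and>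
     (\<forall>x y z. lt x y \<longrightarrow> lt (mult x z) (mult y z)) \<and>
     (\<exists>y. y \<noteq> one) \<and>
     (\<forall>n::nat. n \<ge> 1 \<longrightarrow>
        (\<forall>x z. \<exists>y. lt x z \<longrightarrow> lt x (npow mult one y n) \<and> lt (npow mult one y n) z)) \<and>
     (\<forall>(n::nat) (q::nat) (m::nat \<Rightarrow> nat). n \<ge> 1 \<and> q \<ge> 1 \<and> (\<forall>j<q. m j > 1) \<longrightarrow>
        (\<forall>xs::nat \<Rightarrow> 'a. \<exists>y. \<forall>z. \<forall>j<q. \<not> (m j dvd n) \<longrightarrow>
            mult (npow mult one y n) (xs j) \<noteq> npow mult one z (m j)))"

end

theory Submission
  imports Defs
begin

theorem lemma3:
  fixes lt :: "'a \<Rightarrow> 'a \<Rightarrow> bool" and mult :: "'a \<Rightarrow> 'a \<Rightarrow> 'a"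
    and iv :: "'a \<Rightarrow> 'a" and one :: 'a and n :: nat
  assumes "TQ lt mult iv one" and "n > 1"
  shows "(\<forall>u. \<exists>y. Re mult one n (mult y u)) \<and>
         (\<forall>x u. \<exists>y. lt x y \<and> Re mult one n (mult y u)) \<and>
         (\<forall>z u. \<exists>y. lt y z \<and> Re mult one n (mult y u)) \<and>
         (\<forall>x z u. \<exists>y. lt x z \<longrightarrow> (lt x y \<and> lt y z \<and> Re mult one n (mult y u)))"
proof -
  note T = assms(1)[unfolded TQ_def]
  have tr: "\<And>x y. lt x y \<or> x = y \<or> lt y x" using T[THEN conjunct2, THEN conjunct2, THEN conjunct1] by simp
  have as: "\<And>x y z. mult x (mult y z) = mult (mult x y) z" using T[THEN conjunct2, THEN conjunct2, THEN conjunct2, THEN conjunct1] by simp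
  have un: "\<And>x. mult x one = x" using T[THEN conjunct2, THEN conjunct2, THEN conjunct2, THEN conjunct2, THEN conjunct1] by simp
  have inv: "\<And>x. mult x (iv x) = one" using T[THEN conjunct2, THEN conjunct2, THEN conjunct2, THEN conjunct2, THEN conjunct2, THEN conjunct1] by simp
  have cm: "\<And>x y. mult x y = mult y x" using T[THEN conjunct2, THEN conjunct2, THEN conjunct2, THEN conjunct2, THEN conjunct2, THEN conjunct2, THEN conjunct1] by simp
  have mo: "\<And>x y z. lt x y \<Longrightarrow> lt (mult x z) (mult y z)" using T[THEN conjunct2, THEN conjunct2, THEN conjunct2, THEN conjunct2, THEN conjunct2, THEN conjunct2, THEN conjunct2, THEN conjunct1] by simp
  have nt: "\<exists>y. y \<noteq> one" using T[THEN conjunct2, THEN conjunct2, THEN conjunct2, THEN conjunct2, THEN conjunct2, THEN conjunct2, THEN conjunct2, THEN conjunct2, THEN conjunct1] by blast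
  have d0: "\<forall>n::nat. n \<ge> 1 \<longrightarrow>
        (\<forall>x z. \<exists>y. lt x z \<longrightarrow> lt x (npow mult one y n) \<and> lt (npow mult one y n) z)"
    by (rule T[THEN conjunct2, THEN conjunct2, THEN conjunct2, THEN conjunct2, THEN conjunct2, THEN conjunct2, THEN conjunct2, THEN conjunct2, THEN conjunct2, THEN conjunct1])
  have n1: "n \<ge> 1" using assms(2) by simp
  have dens: "\<And>x z. lt x z \<Longrightarrow> \<exists>y. lt x (npow mult one y n) \<and> lt (npow mult one y n) z"
    using d0 n1 by blast
  have key: "\<And>w u. mult (mult w (iv u)) u = w"
    by (metis as cm inv un)
  have P4: "\<And>x z u. lt x z \<Longrightarrow> \<exists>y. lt x y \<and> lt y z \<and> Re mult one n (mult y u)"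
  proof -
    fix x z u assume "lt x z"
    then have "lt (mult x u) (mult z u)" by (rule mo)
    then obtain w where w: "lt (mult x u) (npow mult one w n)" "lt (npow mult one w n) (mult z u)"
      using dens by blast
    define y where "y = mult (npow mult one w n) (iv u)"
    have "mult (mult x u) (iv u) = x" by (metis as inv un)
    moreover have "mult (mult z u) (iv u) = z" by (metis as inv un)
    ultimately have "lt x y" "lt y z" using w mo[of "mult x u" "npow mult one w n" "iv u"] mo[of "npow mult one w n" "mult z u" "iv u"] unfolding y_def by simp_all
    moreover have "Re mult one n (mult y u)" unfolding y_def key Re_def by blast
    ultimately show "\<exists>y. lt x y \<and> lt y z \<and> Re mult one n (mult y u)" by blast
  qed
  obtain b where b: "lt one b"
  proof -
    obtain a where a: "a \<noteq> one" using nt by blast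
    show ?thesis
    proof (cases "lt one a")
      case True then show ?thesis using that by blast
    next
      case False
      then have "lt a one" using tr a by blast
      then have "lt (mult a (iv a)) (mult one (iv a))" by (rule mo)
      then have "lt one (iv a)" using inv un cm by metis
      then show ?thesis using that by blast
    qed
  qed
  have up: "\<And>x. lt x (mult x b)"
  proof -
    fix x have "lt (mult one x) (mult b x)" using b mo by blast
    then show "lt x (mult x b)" using un cm by metis
  qed
  have down: "\<And>z. lt (mult z (iv b)) z"
  proof -
    fix z have "lt (mult (mult z (iv b)) one) (mult (mult z (iv b)) b)"
      using up by (metis un)
    moreover have "mult (mult z (iv b)) b = z" using key by blast
    ultimately show "lt (mult z (iv b)) z" using un by metis
  qed
  show ?thesis
  proof (intro conjI allI)
    fix u show "\<exists>y. Re mult one n (mult y u)"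
      using key unfolding Re_def by metis
  next
    fix x u show "\<exists>y. lt x y \<and> Re mult one n (mult y u)"
      using P4[OF up[of x]] by blast
  next
    fix z u show "\<exists>y. lt y z \<and> Re mult one n (mult y u)"
      using P4[OF down[of z]] by blast
  next
    fix x z u show "\<exists>y. lt x z \<longrightarrow> (lt x y \<and> lt y z \<and> Re mult one n (mult y u))"
      using P4 by blast
  qed
qed

end
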